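(* For every $\beta\in[0,\infty)$, $N\in\mathbb N$, $(x,y)\in\widehat\Lambda_N\times\widehat\Lambda_N$, $t\ge0$ and every symmetric function $f:\widehat\Lambda_N\times\widehat\Lambda_N\to\mathbb R$ (i.e. $f(a,b)=f(b,a)$), $$\mathsf E^N\big[f(X^{N,x}_t,Y^{N,y}_t)\big]=\widetilde{\mathsf E}^N\big[f(\widetilde X^{N,U}_t,\widetilde Y^{N,V}_t)\big],$$ where $(U,V)$ is independent of the dynamics and equals $(x,y)$ or $(y,x)$ with probability $1/2$ each.
   Context: Fix $\alpha,\alpha_L,\alpha_R>0$, $\beta\ge0$, $\Lambda_N=\{1,\dots,N-1\}$, $\widehat\Lambda_N=\{0,\dots,N\}$. $A^N$ acts on $f:\widehat\Lambda_N\to\mathbb R$ by $A^Nf(x)=\mathbf 1_{\{x\in\Lambda_N\}}N^2\sum_{z\in\Lambda_N,|z-x|=1}\alpha(f(z)-f(x))+\mathbf 1_{\{x=1\}}N^{2-\beta}\alpha_L(f(0)-f(1))+\mathbf 1_{\{x=N-1\}}N^{2-\beta}\alpha_R(f(N)-f(N-1))$. $(X^{N,x}_t,Y^{N,y}_t)_{t\ge0}$, with law/expectation $\mathsf P^N,\mathsf E^N$, is the Markov process on $\widehat\Lambda_N^2$ started at $(x,y)$ with generator $B^Nf(x,y)=A^Nf(\cdot,y)(x)+A^Nf(x,\cdot)(y)+N^2\mathbf 1_{\{x,y\notin\{0,N\}\}}\mathbf 1_{\{|x-y|=1\}}\big((f(x,x)-f(x,y))+(f(y,y)-f(x,y))\big)$.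 $(\widetilde X^{N,x}_t,\widetilde Y^{N,y}_t)_{t\ge0}$, with law/expectation $\widetilde{\mathsf P}^N,\widetilde{\mathsf E}^N$, is the (hierarchical "first/second class") Markov process on $\widehat\Lambda_N^2$ started at $(x,y)$ with generator $C^Nf(x,y)=A^Nf(\cdot,y)(x)+A^Nf(x,\cdot)(y)+N^2\mathbf 1_{\{x,y\in\Lambda_N\}}\mathbf 1_{\{|x-y|=1\}}\,2\,(f(x,x)-f(x,y))$. *)

theory Defs
  imports "HOL-Analysis.Analysis"
begin

definition Lam :: "nat \<Rightarrow> nat set" where
  "Lam N = {1..<N}"

definition LamHat :: "nat \<Rightarrow> nat set" where
  "LamHat N = {0..N}"

definition genA :: "real \<Rightarrow> real \<Rightarrow> real \<Rightarrow> real \<Rightarrow> nat \<Rightarrow> (nat \<Rightarrow> real) \<Rightarrow> nat \<Rightarrow> real" where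
  "genA \<alpha> \<alpha>L \<alpha>R \<beta> N f x =
     (if x \<in> Lam N then real N ^ 2 *
         (\<Sum>z\<in>{z \<in> Lam N. \<bar>int z - int x\<bar> = 1}. \<alpha> * (f z - f x)) else 0)
   + (if x = 1 then real N powr (2 - \<beta>) * \<alpha>L * (f 0 - f 1) else 0)
   + (if x = N - 1 then real N powr (2 - \<beta>) * \<alpha>R * (f N - f (N - 1)) else 0)"

definition genB :: "real \<Rightarrow> real \<Rightarrow> real \<Rightarrow> real \<Rightarrow> nat \<Rightarrow> (nat \<times> nat \<Rightarrow> real) \<Rightarrow> nat \<times> nat \<Rightarrow> real" where
  "genB \<alpha> \<alpha>L \<alpha>R \<beta> N f p = (case p of (x, y) \<Rightarrow>
     genA \<alpha> \<alpha>L \<alpha>R \<beta> N (\<lambda>a. f (a, y)) x + genA \<alpha> \<alpha>L \<alpha>R \<beta> N (\<lambda>b. f (x, b)) y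
   + real N ^ 2 * (if x \<notin> {0, N} \<and> y \<notin> {0, N} \<and> \<bar>int x - int y\<bar> = 1
        then (f (x, x) - f (x, y)) + (f (y, y) - f (x, y)) else 0))"

definition genC :: "real \<Rightarrow> real \<Rightarrow> real \<Rightarrow> real \<Rightarrow> nat \<Rightarrow> (nat \<times> nat \<Rightarrow> real) \<Rightarrow> nat \<times> nat \<Rightarrow> real" where
  "genC \<alpha> \<alpha>L \<alpha>R \<beta> N f p = (case p of (x, y) \<Rightarrow>
     genA \<alpha> \<alpha>L \<alpha>R \<beta> N (\<lambda>a. f (a, y)) x + genA \<alpha> \<alpha>L \<alpha>R \<beta> N (\<lambda>b. f (x, b)) y
   + real N ^ 2 * (if x \<in> Lam N \<and> y \<in> Lam N \<and> \<bar>int x - int y\<bar> = 1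
        then 2 * (f (x, x) - f (x, y)) else 0))"

text \<open>Markov semigroup e^{tG} of a finite-state generator G, acting on observables:
  (markov_sg G t f) s = E_s[f(Z_t)] for the chain Z with generator G started at s.\<close>
definition markov_sg :: "(('s \<Rightarrow> real) \<Rightarrow> ('s \<Rightarrow> real)) \<Rightarrow> real \<Rightarrow> ('s \<Rightarrow> real) \<Rightarrow> 's \<Rightarrow> real" where
  "markov_sg G t f s = (\<Sum>k. t ^ k / fact k * (G ^^ k) f s)"

end

theory Submission
  imports Defs
begin

lemma genA_avg:
  "genA \<alpha> \<alpha>L \<alpha>R \<beta> N (\<lambda>z. (a z + b z) / 2) x
     = (genA \<alpha> \<alpha>L \<alpha>R \<beta> N a x + genA \<alpha> \<alpha>L \<alpha>R \<beta> N b x) / 2"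
proof -
  have "(\<Sum>z\<in>S. \<alpha> * ((a z + b z) / 2 - (a x + b x) / 2))
      = ((\<Sum>z\<in>S. \<alpha> * (a z - a x)) + (\<Sum>z\<in>S. \<alpha> * (b z - b x))) / 2" for S
  proof -
    have "(\<Sum>z\<in>S. \<alpha> * ((a z + b z) / 2 - (a x + b x) / 2))
        = (\<Sum>z\<in>S. (\<alpha> * (a z - a x) + \<alpha> * (b z - b x)) / 2)"
      by (rule sum.cong) (auto simp: field_simps)
    also have "\<dots> = ((\<Sum>z\<in>S. \<alpha> * (a z - a x)) + (\<Sum>z\<in>S. \<alpha> * (b z - b x))) / 2"
      by (simp add: sum_divide_distrib[symmetric] sum.distrib)
    finally show ?thesis .
  qed
  then show ?thesis unfolding genA_def
    by (simp only: ) (auto simp: field_simps)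
qed

lemma genA_loc:
  assumes "x \<in> LamHat N" "\<forall>z\<in>LamHat N. h z = h' z"
  shows "genA \<alpha> \<alpha>L \<alpha>R \<beta> N h x = genA \<alpha> \<alpha>L \<alpha>R \<beta> N h' x"
proof -
  have s: "(\<Sum>z\<in>{z \<in> Lam N. \<bar>int z - int x\<bar> = 1}. \<alpha> * (h z - h x))
         = (\<Sum>z\<in>{z \<in> Lam N. \<bar>int z - int x\<bar> = 1}. \<alpha> * (h' z - h' x))"
    using assms by (intro sum.cong) (auto simp: Lam_def LamHat_def)
  show ?thesis unfolding genA_def using assms s
    by (auto simp: LamHat_def)
qed

lemma genA_bound:
  assumes "x \<in> LamHat N" "\<forall>z\<in>LamHat N. \<bar>h z\<bar> \<le> m" "\<alpha> > 0" "\<alpha>L > 0" "\<alpha>R > 0"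
  shows "\<bar>genA \<alpha> \<alpha>L \<alpha>R \<beta> N h x\<bar>
     \<le> (real N ^ 2 * real N * 2 * \<alpha> + real N powr (2 - \<beta>) * (\<alpha>L + \<alpha>R) * 2) * m"
proof -
  let ?S = "{z \<in> Lam N. \<bar>int z - int x\<bar> = 1}"
  have m0: "m \<ge> 0" using assms(2) by (auto simp: LamHat_def intro: order_trans[OF abs_ge_zero])
  have hx: "\<bar>h x\<bar> \<le> m" using assms by auto
  have t: "\<bar>\<alpha> * (h z - h x)\<bar> \<le> 2 * \<alpha> * m" if "z \<in> ?S" for z
  proof -
    have "\<bar>h z\<bar> \<le> m" using that assms(2) by (auto simp: Lam_def LamHat_def)
    hence "\<bar>h z - h x\<bar> \<le> 2 * m" using hx by linarith
    thus ?thesis using assms(3) by (simp add: abs_mult mult.assoc)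
  qed
  have fin: "finite ?S" by (simp add: Lam_def)
  have cS: "real (card ?S) \<le> real N"
  proof -
    have "card ?S \<le> card (Lam N)" by (rule card_mono) (auto simp: Lam_def)
    thus ?thesis by (simp add: Lam_def)
  qed
  have "\<bar>\<Sum>z\<in>?S. \<alpha> * (h z - h x)\<bar> \<le> (\<Sum>z\<in>?S. 2 * \<alpha> * m)"
    by (rule order_trans[OF sum_abs sum_mono]) (use t in auto)
  also have "\<dots> = real (card ?S) * (2 * \<alpha> * m)" by simp
  also have "\<dots> \<le> real N * (2 * \<alpha> * m)"
    using cS m0 assms(3) by (intro mult_right_mono) auto
  finally have s: "\<bar>\<Sum>z\<in>?S. \<alpha> * (h z - h x)\<bar> \<le> real N * (2 * \<alpha> * m)" .
  define P where "P = real N powr (2 - \<beta>)"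
  have P0: "P \<ge> 0" by (simp add: P_def)
  have a1: "\<bar>(if x \<in> Lam N then real N ^ 2 * (\<Sum>z\<in>?S. \<alpha> * (h z - h x)) else 0)\<bar>
        \<le> real N ^ 2 * (real N * (2 * \<alpha> * m))"
  proof (cases "x \<in> Lam N")
    case True
    then show ?thesis using s by (simp add: abs_mult mult_left_mono)
  next
    case False then show ?thesis using m0 assms(3) by simp
  qed
  have a2: "\<bar>(if x = 1 then P * \<alpha>L * (h 0 - h 1) else 0)\<bar> \<le> P * \<alpha>L * (2 * m)"
  proof (cases "x = 1")
    case True
    have "\<bar>h 0\<bar> \<le> m" "\<bar>h 1\<bar> \<le> m" using assms(2) True assms(1) by (auto simp: LamHat_def)
    hence "\<bar>h 0 - h 1\<bar> \<le> 2 * m" by linarith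
    thus ?thesis using True P0 assms(4) by (simp add: abs_mult mult_left_mono)
  next
    case False then show ?thesis using m0 assms(4) P0 by simp
  qed
  have a3: "\<bar>(if x = N - 1 then P * \<alpha>R * (h N - h (N - 1)) else 0)\<bar> \<le> P * \<alpha>R * (2 * m)"
  proof (cases "x = N - 1")
    case True
    have "\<bar>h N\<bar> \<le> m" "\<bar>h (N - 1)\<bar> \<le> m" using assms(2) by (auto simp: LamHat_def)
    hence "\<bar>h N - h (N - 1)\<bar> \<le> 2 * m" by linarith
    thus ?thesis using True P0 assms(5) by (simp add: abs_mult mult_left_mono)
  next
    case False then show ?thesis using m0 assms(5) P0 by simp
  qed
  have "\<bar>genA \<alpha> \<alpha>L \<alpha>R \<beta> N h x\<bar> \<le> real N ^ 2 * (real N * (2 * \<alpha> * m))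
        + P * \<alpha>L * (2 * m) + P * \<alpha>R * (2 * m)"
    unfolding genA_def P_def[symmetric]
    using a1 a2 a3 by (smt (verit))
  thus ?thesis unfolding P_def by (simp add: algebra_simps)
qed

definition DD :: "nat \<Rightarrow> (nat \<times> nat) set" where "DD N = LamHat N \<times> LamHat N"

lemma genC_bound:
  assumes "p \<in> DD N" "\<forall>q\<in>DD N. \<bar>g q\<bar> \<le> m" "\<alpha> > 0" "\<alpha>L > 0" "\<alpha>R > 0"
  shows "\<bar>genC \<alpha> \<alpha>L \<alpha>R \<beta> N g p\<bar>
     \<le> (2 * (real N ^ 2 * real N * 2 * \<alpha> + real N powr (2 - \<beta>) * (\<alpha>L + \<alpha>R) * 2)
         + 4 * real N ^ 2) * m"
proof -
  obtain x y where p: "p = (x, y)" by force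
  let ?KA = "real N ^ 2 * real N * 2 * \<alpha> + real N powr (2 - \<beta>) * (\<alpha>L + \<alpha>R) * 2"
  have xy: "x \<in> LamHat N" "y \<in> LamHat N" using assms(1) p by (auto simp: DD_def)
  have m0: "m \<ge> 0" using assms(2) xy p by (auto simp: DD_def intro: order_trans[OF abs_ge_zero])
  have b1: "\<bar>genA \<alpha> \<alpha>L \<alpha>R \<beta> N (\<lambda>a. g (a, y)) x\<bar> \<le> ?KA * m"
    using xy assms by (intro genA_bound) (auto simp: DD_def)
  have b2: "\<bar>genA \<alpha> \<alpha>L \<alpha>R \<beta> N (\<lambda>b. g (x, b)) y\<bar> \<le> ?KA * m"
    using xy assms by (intro genA_bound) (auto simp: DD_def)
  have gxx: "\<bar>g (x, x)\<bar> \<le> m" "\<bar>g (x, y)\<bar> \<le> m" using xy assms(2) by (auto simp: DD_def)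
  have b3: "\<bar>real N ^ 2 * (if x \<in> Lam N \<and> y \<in> Lam N \<and> \<bar>int x - int y\<bar> = 1
        then 2 * (g (x, x) - g (x, y)) else 0)\<bar> \<le> real N ^ 2 * (4 * m)"
  proof -
    have "\<bar>(if x \<in> Lam N \<and> y \<in> Lam N \<and> \<bar>int x - int y\<bar> = 1
        then 2 * (g (x, x) - g (x, y)) else 0)\<bar> \<le> 4 * m" using gxx m0 by auto
    thus ?thesis by (simp add: abs_mult mult_left_mono)
  qed
  have eq: "genC \<alpha> \<alpha>L \<alpha>R \<beta> N g p = genA \<alpha> \<alpha>L \<alpha>R \<beta> N (\<lambda>a. g (a, y)) x
     + genA \<alpha> \<alpha>L \<alpha>R \<beta> N (\<lambda>b. g (x, b)) y
     + real N ^ 2 * (if x \<in> Lam N \<and> y \<in> Lam N \<and> \<bar>int x - int y\<bar> = 1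
        then 2 * (g (x, x) - g (x, y)) else 0)"
    unfolding p genC_def by simp
  have "\<bar>genC \<alpha> \<alpha>L \<alpha>R \<beta> N g p\<bar> \<le> ?KA * m + ?KA * m + real N ^ 2 * (4 * m)"
    unfolding eq using b1 b2 b3 abs_triangle_ineq order_trans by linarith
  thus ?thesis by (simp add: algebra_simps)
qed

lemma genB_loc:
  assumes "p \<in> DD N" "\<forall>q\<in>DD N. g q = g' q"
  shows "genB \<alpha> \<alpha>L \<alpha>R \<beta> N g p = genB \<alpha> \<alpha>L \<alpha>R \<beta> N g' p"
proof -
  obtain x y where p: "p = (x, y)" by force
  have xy: "x \<in> LamHat N" "y \<in> LamHat N" using assms(1) p by (auto simp: DD_def)
  have "genA \<alpha> \<alpha>L \<alpha>R \<beta> N (\<lambda>a. g (a, y)) x = genA \<alpha> \<alpha>L \<alpha>R \<beta> N (\<lambda>a. g' (a, y)) x"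
    using xy assms by (intro genA_loc) (auto simp: DD_def)
  moreover have "genA \<alpha> \<alpha>L \<alpha>R \<beta> N (\<lambda>b. g (x, b)) y = genA \<alpha> \<alpha>L \<alpha>R \<beta> N (\<lambda>b. g' (x, b)) y"
    using xy assms by (intro genA_loc) (auto simp: DD_def)
  moreover have "g (x,x) = g' (x,x)" "g (x,y) = g' (x,y)" "g (y,y) = g' (y,y)"
    using xy assms by (auto simp: DD_def)
  ultimately show ?thesis unfolding p genB_def by simp
qed

lemma SC_eq_BS:
  assumes "p \<in> DD N"
  shows "(genC \<alpha> \<alpha>L \<alpha>R \<beta> N g p + genC \<alpha> \<alpha>L \<alpha>R \<beta> N g (prod.swap p)) / 2
       = genB \<alpha> \<alpha>L \<alpha>R \<beta> N (\<lambda>q. (g q + g (prod.swap q)) / 2) p"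
proof -
  obtain x y where p: "p = (x, y)" by force
  have xy: "x \<in> LamHat N" "y \<in> LamHat N" using assms(1) p by (auto simp: DD_def)
  have c: "(x \<notin> {0, N} \<and> y \<notin> {0, N}) = (x \<in> Lam N \<and> y \<in> Lam N)"
    using xy by (auto simp: Lam_def LamHat_def)
  have e1: "genA \<alpha> \<alpha>L \<alpha>R \<beta> N (\<lambda>a. (g (a, y) + g (y, a)) / 2) x
     = (genA \<alpha> \<alpha>L \<alpha>R \<beta> N (\<lambda>a. g (a, y)) x + genA \<alpha> \<alpha>L \<alpha>R \<beta> N (\<lambda>a. g (y, a)) x) / 2"
    by (rule genA_avg)
  have e2: "genA \<alpha> \<alpha>L \<alpha>R \<beta> N (\<lambda>b. (g (x, b) + g (b, x)) / 2) y
     = (genA \<alpha> \<alpha>L \<alpha>R \<beta> N (\<lambda>b. g (x, b)) y + genA \<alpha> \<alpha>L \<alpha>R \<beta> N (\<lambda>b. g (b, x)) y) / 2"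
    by (rule genA_avg)
  have sym: "\<bar>int y - int x\<bar> = \<bar>int x - int y\<bar>" by simp
  let ?c = "x \<in> Lam N \<and> y \<in> Lam N \<and> \<bar>int x - int y\<bar> = 1"
  have c2: "(y \<in> Lam N \<and> x \<in> Lam N \<and> \<bar>int y - int x\<bar> = 1) = ?c" using sym by auto
  have c3: "(x \<notin> {0, N} \<and> y \<notin> {0, N} \<and> \<bar>int x - int y\<bar> = 1) = ?c" using c by blast
  have L: "(genC \<alpha> \<alpha>L \<alpha>R \<beta> N g p + genC \<alpha> \<alpha>L \<alpha>R \<beta> N g (prod.swap p)) / 2
     = (genA \<alpha> \<alpha>L \<alpha>R \<beta> N (\<lambda>a. g (a, y)) x + genA \<alpha> \<alpha>L \<alpha>R \<beta> N (\<lambda>b. g (x, b)) y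
       + real N ^ 2 * (if ?c then 2 * (g (x, x) - g (x, y)) else 0)
       + genA \<alpha> \<alpha>L \<alpha>R \<beta> N (\<lambda>a. g (a, x)) y + genA \<alpha> \<alpha>L \<alpha>R \<beta> N (\<lambda>b. g (y, b)) x
       + real N ^ 2 * (if ?c then 2 * (g (y, y) - g (y, x)) else 0)) / 2"
    unfolding p genC_def prod.swap_def by (simp only: fst_conv snd_conv prod.case c2 add.assoc)
  have R: "genB \<alpha> \<alpha>L \<alpha>R \<beta> N (\<lambda>q. (g q + g (prod.swap q)) / 2) p
     = genA \<alpha> \<alpha>L \<alpha>R \<beta> N (\<lambda>a. (g (a, y) + g (y, a)) / 2) x
     + genA \<alpha> \<alpha>L \<alpha>R \<beta> N (\<lambda>b. (g (x, b) + g (b, x)) / 2) y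
     + real N ^ 2 * (if ?c then ((g (x, x) + g (x, x)) / 2 - (g (x, y) + g (y, x)) / 2)
          + ((g (y, y) + g (y, y)) / 2 - (g (x, y) + g (y, x)) / 2) else 0)"
    unfolding p genB_def prod.swap_def by (simp only: fst_conv snd_conv prod.case c3)
  show ?thesis
  proof (cases ?c)
    case True
    hence cc: "?c = True" by simp
    show ?thesis unfolding L R e1 e2 cc if_True by (simp add: field_simps)
  next
    case False
    hence cc: "?c = False" by simp
    show ?thesis unfolding L R e1 e2 cc if_False by (simp add: field_simps)
  qed
qed

theorem proposition4p5:
  fixes \<alpha> \<alpha>L \<alpha>R \<beta> t :: real and N x y :: nat and f :: "nat \<times> nat \<Rightarrow> real"
  assumes "\<alpha> > 0" and "\<alpha>L > 0" and "\<alpha>R > 0" and "\<beta> \<ge> 0" and "t \<ge> 0"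
    and "x \<in> LamHat N" and "y \<in> LamHat N"
    and "\<forall>a\<in>LamHat N. \<forall>b\<in>LamHat N. f (a, b) = f (b, a)"
  shows "markov_sg (genB \<alpha> \<alpha>L \<alpha>R \<beta> N) t f (x, y) =
         (1/2) * markov_sg (genC \<alpha> \<alpha>L \<alpha>R \<beta> N) t f (x, y)
       + (1/2) * markov_sg (genC \<alpha> \<alpha>L \<alpha>R \<beta> N) t f (y, x)"
proof -
  let ?B = "genB \<alpha> \<alpha>L \<alpha>R \<beta> N" and ?C = "genC \<alpha> \<alpha>L \<alpha>R \<beta> N"
  have key: "\<forall>p\<in>DD N. ((?C ^^ k) f p + (?C ^^ k) f (prod.swap p)) / 2 = (?B ^^ k) f p" for k
  proof (induction k)
    case 0
    then show ?case using assms(8) by (auto simp: DD_def)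
  next
    case (Suc k)
    show ?case
    proof
      fix p assume p: "p \<in> DD N"
      have "((?C ^^ Suc k) f p + (?C ^^ Suc k) f (prod.swap p)) / 2
          = ?B (\<lambda>q. ((?C ^^ k) f q + (?C ^^ k) f (prod.swap q)) / 2) p"
        using SC_eq_BS[OF p] by simp
      also have "\<dots> = ?B ((?B ^^ k) f) p"
        by (rule genB_loc[OF p]) (use Suc in auto)
      finally show "((?C ^^ Suc k) f p + (?C ^^ Suc k) f (prod.swap p)) / 2 = (?B ^^ Suc k) f p"
        by simp
    qed
  qed
  define K where "K = 2 * (real N ^ 2 * real N * 2 * \<alpha> + real N powr (2 - \<beta>) * (\<alpha>L + \<alpha>R) * 2)
         + 4 * real N ^ 2"
  have K0: "K \<ge> 0" unfolding K_def using assms(1-3) by simp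
  define m0 where "m0 = (\<Sum>q\<in>DD N. \<bar>f q\<bar>)"
  have finD: "finite (DD N)" by (simp add: DD_def LamHat_def)
  have m0b: "\<forall>q\<in>DD N. \<bar>f q\<bar> \<le> m0" unfolding m0_def
    using finD by (auto intro: member_le_sum)
  have bnd: "\<forall>p\<in>DD N. \<bar>(?C ^^ k) f p\<bar> \<le> K ^ k * m0" for k
  proof (induction k)
    case 0 then show ?case using m0b by simp
  next
    case (Suc k)
    show ?case
    proof
      fix p assume p: "p \<in> DD N"
      have "\<bar>?C ((?C ^^ k) f) p\<bar> \<le> K * (K ^ k * m0)"
        by (rule genC_bound[OF p Suc.IH assms(1-3), where \<beta>=\<beta>, folded K_def])
      thus "\<bar>(?C ^^ Suc k) f p\<bar> \<le> K ^ Suc k * m0" by simp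
    qed
  qed
  have summ: "summable (\<lambda>k. t ^ k / fact k * (?C ^^ k) f p)" if p: "p \<in> DD N" for p
  proof (rule summable_comparison_test)
    show "\<exists>N'. \<forall>n\<ge>N'. norm (t ^ n / fact n * (?C ^^ n) f p) \<le> m0 * (inverse (fact n) * (t * K) ^ n)"
    proof (intro exI allI impI)
      fix n :: nat
      have "norm (t ^ n / fact n * (?C ^^ n) f p) = t ^ n / fact n * \<bar>(?C ^^ n) f p\<bar>"
        using assms(5) by (simp add: abs_mult)
      also have "\<dots> \<le> t ^ n / fact n * (K ^ n * m0)"
        using bnd p assms(5) by (intro mult_left_mono) auto
      also have "\<dots> = m0 * (inverse (fact n) * (t * K) ^ n)"
        by (simp add: power_mult_distrib field_simps)
      finally show "norm (t ^ n / fact n * (?C ^^ n) f p) \<le> m0 * (inverse (fact n) * (t * K) ^ n)" .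
    qed
    show "summable (\<lambda>n. m0 * (inverse (fact n) * (t * K) ^ n))"
      by (intro summable_mult summable_exp)
  qed
  have pxy: "(x, y) \<in> DD N" "(y, x) \<in> DD N" using assms(6,7) by (auto simp: DD_def)
  have "markov_sg ?B t f (x, y) = (\<Sum>k. t ^ k / fact k * (?B ^^ k) f (x, y))"
    by (simp add: markov_sg_def)
  also have "\<dots> = (\<Sum>k. (1/2) * (t ^ k / fact k * (?C ^^ k) f (x, y))
                     + (1/2) * (t ^ k / fact k * (?C ^^ k) f (y, x)))"
  proof (intro suminf_cong)
    fix n
    have "(genB \<alpha> \<alpha>L \<alpha>R \<beta> N ^^ n) f (x, y)
        = ((?C ^^ n) f (x, y) + (?C ^^ n) f (y, x)) / 2"
      using key[of n] pxy(1) by (metis swap_simp)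
    then show "t ^ n / fact n * (?B ^^ n) f (x, y) =
            1 / 2 * (t ^ n / fact n * (?C ^^ n) f (x, y)) +
            1 / 2 * (t ^ n / fact n * (?C ^^ n) f (y, x))"
      by (simp add: field_simps)
  qed
  also have "\<dots> = (\<Sum>k. (1/2) * (t ^ k / fact k * (?C ^^ k) f (x, y)))
                 + (\<Sum>k. (1/2) * (t ^ k / fact k * (?C ^^ k) f (y, x)))"
    by (intro suminf_add[symmetric] summable_mult summ pxy)
  also have "\<dots> = (1/2) * markov_sg ?C t f (x, y) + (1/2) * markov_sg ?C t f (y, x)"
    unfolding markov_sg_def
    by (simp only: suminf_mult[OF summ[OF pxy(1)]] suminf_mult[OF summ[OF pxy(2)]])
  finally show ?thesis .
qed

end
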